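(* Let $\{M_n\}_{n\ge 0}$ be the Motzkin numbers, determined by $M_0=M_1=1$ and $(n+3)M_{n+1}=(2n+3)M_n+3nM_{n-1}$ for $n\ge 1$. Then $\{M_n\}_{n\ge 0}$ is log-convex.
   Context: A sequence $a_0,a_1,\ldots$ of nonnegative real numbers is log-convex if $a_{k-1}a_{k+1}\ge a_k^2$ for all $k\ge 1$. *)

theory Defs
  imports Complex_Main
begin

fun motzkin :: "nat \<Rightarrow> real" where
  "motzkin 0 = 1"
| "motzkin (Suc 0) = 1"
| "motzkin (Suc (Suc n)) =
     ((2 * real (Suc n) + 3) * motzkin (Suc n) + 3 * real (Suc n) * motzkin n) / (real (Suc n) + 3)"

definition log_convex :: "(nat \<Rightarrow> real) \<Rightarrow> bool" where
  "log_convex a \<longleftrightarrow> (\<forall>k. a k \<ge> 0) \<and> (\<forall>k\<ge>1. a (k - 1) * a (k + 1) \<ge> (a k)^2)"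

lemma motzkin_rec:
  "n \<ge> 1 \<Longrightarrow> (real n + 3) * motzkin (n + 1) = (2 * real n + 3) * motzkin n + 3 * real n * motzkin (n - 1)"
  by (cases n rule: nat.exhaust) (auto simp: field_simps)

end

theory Submission
  imports Defs
begin

lemma motzkin_step:
  "motzkin (n + 2) * (real n + 4) = (2 * real n + 5) * motzkin (n + 1) + 3 * (real n + 1) * motzkin n"
proof -
  have "motzkin (Suc (Suc n)) = ((2 * real (Suc n) + 3) * motzkin (Suc n) + 3 * real (Suc n) * motzkin n) / (real (Suc n) + 3)"
    by simp
  then show ?thesis by (simp add: field_simps)
qed

declare motzkin.simps(3)[simp del]

lemma motzkin_pos: "motzkin n > 0"
proof (induction n rule: nat_less_induct)
  case (1 n)
  show ?case
  proof (cases n)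
    case 0 then show ?thesis by simp
  next
    case (Suc m)
    show ?thesis
    proof (cases m)
      case 0 then show ?thesis using Suc by simp
    next
      case (Suc k)
      have a: "motzkin (k+1) > 0" "motzkin k > 0" using 1 \<open>n = Suc m\<close> Suc by auto
      have p1: "(2 * real k + 5) * motzkin (k + 1) > 0" using a by simp
      have p2: "3 * (real k + 1) * motzkin k > 0" using a by simp
      have "motzkin (k + 2) * (real k + 4) > 0"
        unfolding motzkin_step using p1 p2 by linarith
      then have "motzkin (k+2) > 0" by (simp add: zero_less_mult_iff)
      then show ?thesis using \<open>n = Suc m\<close> Suc by simp
    qed
  qed
qed

lemma motzkin_bounds:
  assumes "n \<ge> 2"
  shows "(6 * real n + 6) * motzkin n \<le> (2 * real n + 5) * motzkin (n+1)
       \<and> 2 * (real n + 3) * motzkin (n+1) \<le> 3 * (2 * real n + 3) * motzkin n"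
  using assms
proof (induction n rule: dec_induct)
  case base
  have m2: "motzkin 2 = 2" by (simp add: numeral_2_eq_2 motzkin.simps)
  have m3: "motzkin 3 = 4" by (simp add: numeral_3_eq_3 numeral_2_eq_2 motzkin.simps)
  show ?case by (simp add: m2 m3)
next
  case (step n)
  let ?x = "real n"
  let ?A = "motzkin n" and ?B = "motzkin (n+1)" and ?C = "motzkin (n+2)"
  have rec: "?C * (?x + 4) = (2 * ?x + 5) * ?B + 3 * (?x + 1) * ?A" by (rule motzkin_step)
  have lo: "(6 * ?x + 6) * ?A \<le> (2 * ?x + 5) * ?B" and up: "2 * (?x + 3) * ?B \<le> 3 * (2 * ?x + 3) * ?A"
    using step.IH by auto
  have A: "?A > 0" "?B > 0" using motzkin_pos by auto
  have x: "?x \<ge> 2" using step.hyps by simp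
  have u2: "2 * (?x + 4) * ?C \<le> 3 * (2 * ?x + 5) * ?B"
  proof -
    have "2 * (?x + 4) * ?C = 2 * ((2 * ?x + 5) * ?B) + 2 * (3 * (?x + 1) * ?A)"
      using rec by (simp add: algebra_simps)
    moreover have "2 * (3 * (?x + 1) * ?A) \<le> (2 * ?x + 5) * ?B" using lo by (simp add: algebra_simps)
    ultimately show ?thesis by (simp add: algebra_simps)
  qed
  have key: "(2*?x*?x+12*?x+13) * (2 * (?x + 3) * ?B) \<le> (2*?x*?x+12*?x+13) * (3 * (2 * ?x + 3) * ?A)"
    using up x by (intro mult_left_mono) auto
  have key2: "(2*?x*?x+12*?x+13) * (3 * (2 * ?x + 3)) * ?A \<le> 3 * (?x + 1) * (2 * ?x + 7) * (2 * (?x + 3)) * ?A"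
    using A x by (intro mult_right_mono) (auto simp: power2_eq_square algebra_simps)
  have "(2*?x*?x+12*?x+13) * ?B \<le> 3 * (?x + 1) * (2 * ?x + 7) * ?A"
  proof -
    have "2 * (?x + 3) * ((2*?x*?x+12*?x+13) * ?B) \<le> 2 * (?x + 3) * (3 * (?x + 1) * (2 * ?x + 7) * ?A)"
      using key key2 by (simp add: algebra_simps)
    then show ?thesis using x by simp
  qed
  then have l2: "(6 * (?x+1) + 6) * ?B \<le> (2 * (?x+1) + 5) * ?C"
  proof -
    assume h: "(2*?x*?x+12*?x+13) * ?B \<le> 3 * (?x + 1) * (2 * ?x + 7) * ?A"
    have "(?x + 4) * ((6 * (?x+1) + 6) * ?B) \<le> (?x + 4) * ((2 * (?x+1) + 5) * ?C)"
    proof -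
      have "(?x + 4) * ((2 * (?x+1) + 5) * ?C) = (2 * ?x + 7) * ((2 * ?x + 5) * ?B + 3 * (?x + 1) * ?A)"
        using rec by (simp add: algebra_simps)
      moreover have "(?x + 4) * ((6 * (?x+1) + 6) * ?B) = (2 * ?x + 7) * (2 * ?x + 5) * ?B + (2*?x*?x+12*?x+13) * ?B"
        by (simp add: algebra_simps power2_eq_square)
      ultimately show ?thesis using h by (simp add: algebra_simps)
    qed
    then show ?thesis using x by simp
  qed
  show ?case using l2 u2 by (simp add: algebra_simps)
qed

theorem corollary3p3:
  shows "log_convex motzkin"
  unfolding log_convex_def
proof (intro conjI allI impI)
  fix k :: nat
  show "motzkin k \<ge> 0" using motzkin_pos[of k] by simp
next
  fix k :: nat
  assume k: "k \<ge> 1"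
  have m2: "motzkin 2 = 2" by (simp add: numeral_2_eq_2 motzkin.simps)
  have m3: "motzkin 3 = 4" by (simp add: numeral_3_eq_3 numeral_2_eq_2 motzkin.simps)
  consider "k = 1" | "k = 2" | "k \<ge> 3" using k by linarith
  then show "(motzkin k)^2 \<le> motzkin (k - 1) * motzkin (k + 1)"
  proof cases
    case 1 then show ?thesis using m2 by (simp add: numeral_2_eq_2)
  next
    case 2 then show ?thesis using m3 by (simp add: numeral_2_eq_2 motzkin.simps)
  next
    case 3
    define n where "n = k - 1"
    have n: "n \<ge> 2" "k = n + 1" using 3 by (auto simp: n_def)
    let ?x = "real n"
    let ?A = "motzkin n" and ?B = "motzkin (n+1)" and ?C = "motzkin (n+2)"
    have b1: "2 * (?x + 3) * ?B \<le> 3 * (2 * ?x + 3) * ?A" using motzkin_bounds[OF n(1)] by auto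
    have b2: "(6 * (?x+1) + 6) * ?B \<le> (2 * (?x+1) + 5) * ?C" using motzkin_bounds[of "n+1"] n by auto
    have A: "?A > 0" "?B > 0" "?C > 0" using motzkin_pos by auto
    have x: "?x \<ge> 2" using n by simp
    have "(2 * (?x + 3) * ?B) * ((6 * (?x+1) + 6) * ?B) \<le> (3 * (2 * ?x + 3) * ?A) * ((2 * (?x+1) + 5) * ?C)"
      using A x by (intro mult_mono[OF b1 b2]) simp_all
    then have "(4*?x*?x+20*?x+24) * (3 * ?B^2) \<le> (4*?x*?x+20*?x+21) * (3 * (?A * ?C))"
      by (simp add: algebra_simps power2_eq_square)
    moreover have "(4*?x*?x+20*?x+21) * (3 * ?B^2) \<le> (4*?x*?x+20*?x+24) * (3 * ?B^2)"
      using A by (intro mult_right_mono) auto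
    ultimately have "(4*?x*?x+20*?x+21) * (3 * ?B^2) \<le> (4*?x*?x+20*?x+21) * (3 * (?A * ?C))"
      by linarith
    then have "?B^2 \<le> ?A * ?C" using x
      by (smt (verit) mult_le_cancel_left_pos zero_le_power2 mult_nonneg_nonneg)
    then show ?thesis using n by (simp add: add.commute)
  qed
qed

end
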